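(* Let $G$ be a 2-connected graph, let $(T,\mathcal{V})$ be a full tree decomposition of $G$, and let $t\in V(T)$. If $\mathrm{lct}(G)>|V_t|-2$, then $V_t$ has an $\ell$-attractor with $\ell\leq 2$, i.e. there is a longest cycle of $G$ that is an $\ell$-attractor for $V_t$ for some $\ell\le 2$.
   Context: All graphs are finite and simple. A tree decomposition of $G$ is a pair $(T,\mathcal{V})$, $T$ a tree and $\mathcal{V}=\{V_t:t\in V(T)\}$ a collection of distinct subsets (bags) of $V(G)$, such that every vertex lies in a bag, every edge has both ends in some bag, and for each vertex the nodes whose bags contain it form a subtree of $T$. If $G$ has treewidth $k$ (the minimum over tree decompositions of the maximum bag size minus one), a full tree decomposition is a tree decomposition with $|V_t|=k+1$ for all nodes $t$ and $|V_t\cap V_{t'}|=k$ for all edges $tt'\in E(T)$. $\mathrm{lct}(G)$ is the minimum cardinality of a set of vertices meeting every longest cycle of $G$. For $S\subseteq V(G)$, $S$ separates a vertex set $X$ if two vertices of $X$ lie in different components of $G-S$; a cycle $C$ crosses $S$ if $S$ separates $V(C)$, and otherwise $C$ is fenced by $S$. Two cycles are $S$-equivalent if they have the same intersection with $S$. A longest cycle $C$ is an attractor for $S$ if $C$ is fenced by $S$ and every longest cycle $S$-equivalent to $C$ is also fenced by $S$; it is an $\ell$-attractor for $S$ if moreover $|V(C)\cap S|=\ell$. *)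

theory Defs
  imports Main
begin

definition graph :: "'a set \<Rightarrow> 'a set set \<Rightarrow> bool" where
  "graph V E \<longleftrightarrow> finite V \<and>
     (\<forall>e\<in>E. \<exists>x y. x \<noteq> y \<and> e = {x, y} \<and> x \<in> V \<and> y \<in> V)"

definition adj_in :: "'a set set \<Rightarrow> 'a set \<Rightarrow> 'a \<Rightarrow> 'a \<Rightarrow> bool" where
  "adj_in E W x y \<longleftrightarrow> x \<in> W \<and> y \<in> W \<and> {x, y} \<in> E"

definition conn_in :: "'a set set \<Rightarrow> 'a set \<Rightarrow> 'a \<Rightarrow> 'a \<Rightarrow> bool" where
  "conn_in E W x y \<longleftrightarrow> x \<in> W \<and> y \<in> W \<and> (adj_in E W)\<^sup>*\<^sup>* x y"

definition connected_set :: "'a set set \<Rightarrow> 'a set \<Rightarrow> bool" where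
  "connected_set E W \<longleftrightarrow> W \<noteq> {} \<and> (\<forall>x\<in>W. \<forall>y\<in>W. conn_in E W x y)"

definition two_connected :: "'a set \<Rightarrow> 'a set set \<Rightarrow> bool" where
  "two_connected V E \<longleftrightarrow> graph V E \<and> card V > 2 \<and>
     (\<forall>X \<subseteq> V. card X < 2 \<longrightarrow> connected_set E (V - X))"

definition is_cycle :: "'a set \<Rightarrow> 'a set set \<Rightarrow> 'a list \<Rightarrow> bool" where
  "is_cycle V E cs \<longleftrightarrow> length cs \<ge> 3 \<and> distinct cs \<and> set cs \<subseteq> V \<and>
     (\<forall>i < length cs. {cs ! i, cs ! ((i + 1) mod length cs)} \<in> E)"

definition longest_cycle :: "'a set \<Rightarrow> 'a set set \<Rightarrow> 'a list \<Rightarrow> bool" where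
  "longest_cycle V E C \<longleftrightarrow> is_cycle V E C \<and>
     (\<forall>D. is_cycle V E D \<longrightarrow> length D \<le> length C)"

definition lct :: "'a set \<Rightarrow> 'a set set \<Rightarrow> nat" where
  "lct V E = (LEAST n. \<exists>X \<subseteq> V. card X = n \<and>
       (\<forall>C. longest_cycle V E C \<longrightarrow> set C \<inter> X \<noteq> {}))"

definition is_tree :: "'b set \<Rightarrow> 'b set set \<Rightarrow> bool" where
  "is_tree N TE \<longleftrightarrow> graph N TE \<and> connected_set TE N \<and> (\<nexists>cs. is_cycle N TE cs)"

definition tree_decomp :: "'a set \<Rightarrow> 'a set set \<Rightarrow> 'b set \<Rightarrow> 'b set set \<Rightarrow> ('b \<Rightarrow> 'a set) \<Rightarrow> bool" where
  "tree_decomp V E N TE bag \<longleftrightarrow> is_tree N TE \<and> inj_on bag N \<and>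
     (\<forall>t\<in>N. bag t \<subseteq> V) \<and>
     (\<forall>v\<in>V. \<exists>t\<in>N. v \<in> bag t) \<and>
     (\<forall>e\<in>E. \<exists>t\<in>N. e \<subseteq> bag t) \<and>
     (\<forall>v\<in>V. connected_set TE {t \<in> N. v \<in> bag t})"

text \<open>Treewidth: the least k such that some tree decomposition has all bags of
  size at most k+1 (the node type is nat; every finite tree is isomorphic to one
  on natural numbers).\<close>
definition treewidth :: "'a set \<Rightarrow> 'a set set \<Rightarrow> nat" where
  "treewidth V E = (LEAST k. \<exists>(N :: nat set) TE bag. tree_decomp V E N TE bag \<and>
       (\<forall>t\<in>N. card (bag t) \<le> k + 1))"

definition full_tree_decomp :: "'a set \<Rightarrow> 'a set set \<Rightarrow> 'b set \<Rightarrow> 'b set set \<Rightarrow> ('b \<Rightarrow> 'a set) \<Rightarrow> bool" where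
  "full_tree_decomp V E N TE bag \<longleftrightarrow> tree_decomp V E N TE bag \<and>
     (\<forall>t\<in>N. card (bag t) = treewidth V E + 1) \<and>
     (\<forall>t\<in>N. \<forall>t'\<in>N. {t, t'} \<in> TE \<longrightarrow> card (bag t \<inter> bag t') = treewidth V E)"

definition separates :: "'a set \<Rightarrow> 'a set set \<Rightarrow> 'a set \<Rightarrow> 'a set \<Rightarrow> bool" where
  "separates V E S X \<longleftrightarrow> (\<exists>x\<in>X - S. \<exists>y\<in>X - S. x \<in> V \<and> y \<in> V \<and> \<not> conn_in E (V - S) x y)"

definition crosses :: "'a set \<Rightarrow> 'a set set \<Rightarrow> 'a set \<Rightarrow> 'a list \<Rightarrow> bool" where
  "crosses V E S C \<longleftrightarrow> separates V E S (set C)"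

definition fenced :: "'a set \<Rightarrow> 'a set set \<Rightarrow> 'a set \<Rightarrow> 'a list \<Rightarrow> bool" where
  "fenced V E S C \<longleftrightarrow> \<not> crosses V E S C"

definition S_equiv :: "'a set \<Rightarrow> 'a list \<Rightarrow> 'a list \<Rightarrow> bool" where
  "S_equiv S C D \<longleftrightarrow> set C \<inter> S = set D \<inter> S"

definition attractor :: "'a set \<Rightarrow> 'a set set \<Rightarrow> 'a set \<Rightarrow> 'a list \<Rightarrow> bool" where
  "attractor V E S C \<longleftrightarrow> longest_cycle V E C \<and> fenced V E S C \<and>
     (\<forall>D. longest_cycle V E D \<and> S_equiv S C D \<longrightarrow> fenced V E S D)"

definition l_attractor :: "'a set \<Rightarrow> 'a set set \<Rightarrow> nat \<Rightarrow> 'a set \<Rightarrow> 'a list \<Rightarrow> bool" where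
  "l_attractor V E l S C \<longleftrightarrow> attractor V E S C \<and> card (set C \<inter> S) = l"

end

theory Submission
  imports Defs
begin

lemma cycle_iff:
  "is_cycle V E cs \<longleftrightarrow> length cs \<ge> 3 \<and> distinct cs \<and> set cs \<subseteq> V \<and>
     successively (\<lambda>u v. {u,v} \<in> E) cs \<and> {last cs, hd cs} \<in> E"
proof
  assume c: "is_cycle V E cs"
  hence l: "length cs \<ge> 3" and e: "\<forall>i < length cs. {cs ! i, cs ! ((i + 1) mod length cs)} \<in> E"
    by (auto simp: is_cycle_def)
  have "successively (\<lambda>u v. {u,v} \<in> E) cs"
    unfolding successively_conv_nth
  proof (intro allI impI)
    fix i assume "Suc i < length cs"
    thus "{cs ! i, cs ! Suc i} \<in> E" using e[rule_format, of i] by simp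
  qed
  moreover have "{last cs, hd cs} \<in> E"
  proof -
    have "cs \<noteq> []" using l by auto
    have "length cs - 1 < length cs" using l by simp
    from e[rule_format, OF this] have "{cs ! (length cs - 1), cs ! ((length cs - 1 + 1) mod length cs)} \<in> E" .
    moreover have "(length cs - 1 + 1) mod length cs = 0" using l by (metis One_nat_def Suc_eq_plus1 Suc_pred le_zero_eq mod_self not_gr_zero numeral_3_eq_3 zero_neq_numeral)
    ultimately have "{cs ! (length cs - 1), cs ! 0} \<in> E" by simp
    thus ?thesis using \<open>cs \<noteq> []\<close> by (simp add: last_conv_nth hd_conv_nth)
  qed
  ultimately show "length cs \<ge> 3 \<and> distinct cs \<and> set cs \<subseteq> V \<and>
     successively (\<lambda>u v. {u,v} \<in> E) cs \<and> {last cs, hd cs} \<in> E" using c by (auto simp: is_cycle_def)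
next
  assume a: "length cs \<ge> 3 \<and> distinct cs \<and> set cs \<subseteq> V \<and>
     successively (\<lambda>u v. {u,v} \<in> E) cs \<and> {last cs, hd cs} \<in> E"
  have "cs \<noteq> []" using a by auto
  have "{cs ! i, cs ! ((i + 1) mod length cs)} \<in> E" if i: "i < length cs" for i
  proof (cases "Suc i < length cs")
    case True
    from a have "successively (\<lambda>u v. {u,v} \<in> E) cs" by blast
    from successively_nth[OF this True] True show ?thesis by simp
  next
    case False
    hence si: "Suc i = length cs" using i by simp
    hence "i = length cs - 1" "(i+1) mod length cs = 0" by auto
    thus ?thesis using a \<open>cs \<noteq> []\<close> by (simp add: last_conv_nth hd_conv_nth)
  qed
  thus "is_cycle V E cs" using a by (auto simp: is_cycle_def)
qed

lemma cycle_rotate: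
  assumes "is_cycle V E (xs @ ys)" shows "is_cycle V E (ys @ xs)"
proof (cases "xs = [] \<or> ys = []")
  case True thus ?thesis using assms by auto
next
  case False
  have s: "successively (\<lambda>u v. {u,v} \<in> E) (xs @ ys)" and cl: "{last (xs@ys), hd (xs@ys)} \<in> E"
    using assms by (auto simp: cycle_iff)
  have "{last xs, hd ys} \<in> E" using s False by (simp add: successively_append_iff)
  hence c2: "{last (ys@xs), hd (ys@xs)} \<in> E" using False by (simp add: insert_commute)
  have "{last ys, hd xs} \<in> E" using cl False by simp
  hence "successively (\<lambda>u v. {u,v} \<in> E) (ys @ xs)" using s False by (simp add: successively_append_iff)
  thus ?thesis using assms c2 by (auto simp: cycle_iff)
qed

lemma conn_refl: "x \<in> W \<Longrightarrow> conn_in E W x x" by (simp add: conn_in_def)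

lemma adj_sym: "adj_in E W x y \<Longrightarrow> adj_in E W y x"
  by (auto simp: adj_in_def insert_commute)

lemma conn_sym: "conn_in E W x y \<Longrightarrow> conn_in E W y x"
proof -
  assume c: "conn_in E W x y"
  have "(adj_in E W)\<^sup>*\<^sup>* x y" using c by (simp add: conn_in_def)
  hence "(adj_in E W)\<^sup>*\<^sup>* y x"
  proof (induction rule: rtranclp_induct)
    case base thus ?case by simp
  next
    case (step y z)
    from adj_sym[OF step(2)] step(3) show ?case by (rule converse_rtranclp_into_rtranclp)
  qed
  thus ?thesis using c by (simp add: conn_in_def)
qed

lemma conn_trans: "conn_in E W x y \<Longrightarrow> conn_in E W y z \<Longrightarrow> conn_in E W x z"
  by (auto simp: conn_in_def)

lemma conn_edge: "x \<in> W \<Longrightarrow> y \<in> W \<Longrightarrow> {x,y} \<in> E \<Longrightarrow> conn_in E W x y"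
  by (auto simp: conn_in_def adj_in_def)

lemma adj_mono: assumes "W \<subseteq> W'" "(adj_in E W)\<^sup>*\<^sup>* x y" shows "(adj_in E W')\<^sup>*\<^sup>* x y"
  using assms(2)
proof (induction rule: rtranclp_induct)
  case base thus ?case by simp
next
  case (step y z)
  hence "adj_in E W' y z" using assms(1) by (auto simp: adj_in_def)
  with step(3) show ?case by (rule rtranclp.rtrancl_into_rtrancl)
qed

lemma conn_mono: "W \<subseteq> W' \<Longrightarrow> conn_in E W x y \<Longrightarrow> conn_in E W' x y"
  unfolding conn_in_def using adj_mono[of W W' E x y] by blast

lemma path_conn:
  "set P \<subseteq> W \<Longrightarrow> successively (\<lambda>u v. {u,v} \<in> E) P \<Longrightarrow> P \<noteq> [] \<Longrightarrow> u \<in> set P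
   \<Longrightarrow> conn_in E W (hd P) u"
proof (induction P arbitrary: u)
  case Nil thus ?case by simp
next
  case (Cons p P)
  show ?case
  proof (cases "u = p")
    case True thus ?thesis using Cons.prems by (simp add: conn_refl)
  next
    case False
    hence "P \<noteq> []" "u \<in> set P" using Cons.prems by auto
    hence "conn_in E W (hd P) u" using Cons by (auto simp: successively_Cons)
    moreover have "conn_in E W p (hd P)"
      using Cons.prems \<open>P \<noteq> []\<close> by (intro conn_edge) (auto simp: successively_Cons)
    ultimately show ?thesis by (auto intro: conn_trans)
  qed
qed

lemma fenced_small:
  assumes c: "is_cycle V E C" and S: "card (set C \<inter> S) \<le> 1"
  shows "fenced V E S C"
proof -
  have "\<exists>R. set R = set C - S \<and> successively (\<lambda>u v. {u,v} \<in> E) R"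
  proof (cases "set C \<inter> S = {}")
    case True thus ?thesis using c by (intro exI[of _ C]) (auto simp: cycle_iff)
  next
    case False
    then obtain s where s: "s \<in> set C \<inter> S" by blast
    have "set C \<inter> S = {s}" using S s card_le_Suc0_iff_eq[of "set C \<inter> S"] by auto
    obtain xs ys where C: "C = xs @ s # ys" using s split_list by fastforce
    have "is_cycle V E ((s # ys) @ xs)" using c C cycle_rotate[of V E xs "s # ys"] by simp
    hence "successively (\<lambda>u v. {u,v} \<in> E) (ys @ xs)"
      by (auto simp: cycle_iff successively_Cons)
    moreover have "set (ys @ xs) = set C - S"
      using c C \<open>set C \<inter> S = {s}\<close> by (auto simp: cycle_iff)
    ultimately show ?thesis by blast
  qed
  then obtain R where R: "set R = set C - S" "successively (\<lambda>u v. {u,v} \<in> E) R" by blast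
  have "set R \<subseteq> V - S" using R c by (auto simp: cycle_iff)
  have "conn_in E (V - S) x y" if "x \<in> set R" "y \<in> set R" for x y
  proof -
    have "R \<noteq> []" using that by auto
    have "conn_in E (V-S) (hd R) x" "conn_in E (V-S) (hd R) y"
      using path_conn[OF \<open>set R \<subseteq> V - S\<close> R(2) \<open>R \<noteq> []\<close>] that by auto
    thus ?thesis by (auto intro: conn_trans conn_sym)
  qed
  thus ?thesis using R(1) by (auto simp: fenced_def crosses_def separates_def)
qed

definition goodp where
  "goodp E V S L x y P \<longleftrightarrow> P \<noteq> [] \<and> distinct P \<and> set P \<subseteq> V - S \<and>
     successively (\<lambda>u v. {u,v} \<in> E) P \<and> {x, hd P} \<in> E \<and> {last P, y} \<in> E \<and> L \<le> 2 * length P + 2"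

lemma goodp_rev: "goodp E V S L x y P \<Longrightarrow> goodp E V S L y x (rev P)"
  unfolding goodp_def
  by (auto simp: hd_rev last_rev insert_commute elim: successively_mono)

lemma split_cycle:
  assumes c: "is_cycle V E D" and ab: "set D \<inter> S = {a,b}" "a \<noteq> b"
  shows "\<exists>P. goodp E V S (length D) a b P"
proof -
  have a: "a \<in> set D" using ab by auto
  obtain xs ys where D: "D = xs @ a # ys" using a split_list by fastforce
  have c1: "is_cycle V E (a # ys @ xs)" using c D cycle_rotate[of V E xs "a # ys"] by simp
  have "b \<in> set (ys @ xs)" using ab D by auto
  then obtain us vs where uv: "ys @ xs = us @ b # vs" using split_list by fastforce
  have c2: "is_cycle V E (a # us @ b # vs)" using c1 uv by simp
  have dis: "distinct (a # us @ b # vs)" and sub: "set (a # us @ b # vs) \<subseteq> V"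
    using c2 by (auto simp: cycle_iff)
  have "set (a # us @ b # vs) = insert a (set (ys @ xs))" using uv by simp
  hence sset: "set (a # us @ b # vs) = set D" using D by auto
  have usS: "set us \<subseteq> V - S" and vsS: "set vs \<subseteq> V - S"
    using sset ab dis sub by auto
  have "length D = length (a # ys @ xs)" using D by simp
  hence len: "length D = length us + length vs + 2" using uv by simp
  have sc: "successively (\<lambda>u v. {u,v} \<in> E) (a # us @ b # vs)" and cl: "{last (a # us @ b # vs), a} \<in> E"
    using c2 by (auto simp: cycle_iff)
  have l3: "length D \<ge> 3" using c by (auto simp: cycle_iff)
  show ?thesis
  proof (cases "length vs \<le> length us")
    case True
    hence "us \<noteq> []" using len l3 by auto
    have s1: "successively (\<lambda>u v. {u,v} \<in> E) us" "{a, hd us} \<in> E" "{last us, b} \<in> E"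
      using sc \<open>us \<noteq> []\<close> by (simp_all add: successively_Cons successively_append_iff)
    have "goodp E V S (length D) a b us"
      unfolding goodp_def using s1 usS dis len True \<open>us \<noteq> []\<close> by simp
    thus ?thesis by blast
  next
    case False
    hence "vs \<noteq> []" by auto
    have s1: "successively (\<lambda>u v. {u,v} \<in> E) vs" "{b, hd vs} \<in> E"
      using sc \<open>vs \<noteq> []\<close> by (simp_all add: successively_Cons successively_append_iff)
    have "{last vs, a} \<in> E" using cl \<open>vs \<noteq> []\<close> by simp
    have "goodp E V S (length D) b a vs"
      unfolding goodp_def using s1 \<open>{last vs, a} \<in> E\<close> vsS dis len False \<open>vs \<noteq> []\<close> by simp
    thus ?thesis using goodp_rev[of E V S "length D" b a vs] by blast
  qed
qed

lemma triangle:
  assumes d: "x \<noteq> y" "y \<noteq> z" "x \<noteq> z" and xyz: "x \<in> S" "y \<in> S" "z \<in> S" and SV: "S \<subseteq> V"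
    and g1: "goodp E V S L x y P1" and g2: "goodp E V S L y z P2" and g3: "goodp E V S L z x P3"
    and dj: "set P1 \<inter> set P2 = {}" "set P2 \<inter> set P3 = {}" "set P1 \<inter> set P3 = {}"
    and L: "3 \<le> L"
  shows "is_cycle V E (x # P1 @ y # P2 @ z # P3) \<and> L < length (x # P1 @ y # P2 @ z # P3)"
proof -
  note g = g1[unfolded goodp_def] g2[unfolded goodp_def] g3[unfolded goodp_def]
  have ne: "P1 \<noteq> []" "P2 \<noteq> []" "P3 \<noteq> []" using g by auto
  have s1: "successively (\<lambda>u v. {u,v} \<in> E) (z # P3)" using g ne by (simp add: successively_Cons)
  have s2: "successively (\<lambda>u v. {u,v} \<in> E) (P2 @ z # P3)"
    using g ne s1 by (simp add: successively_append_iff)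
  have s3: "successively (\<lambda>u v. {u,v} \<in> E) (y # P2 @ z # P3)"
    using g ne s2 by (simp add: successively_Cons)
  have s4: "successively (\<lambda>u v. {u,v} \<in> E) (P1 @ y # P2 @ z # P3)"
    using g ne s3 by (simp add: successively_append_iff)
  have s5: "successively (\<lambda>u v. {u,v} \<in> E) (x # P1 @ y # P2 @ z # P3)"
    using g ne s4 by (simp add: successively_Cons)
  have cl: "{last (x # P1 @ y # P2 @ z # P3), hd (x # P1 @ y # P2 @ z # P3)} \<in> E"
    using g ne by simp
  have notS: "x \<notin> set P1 \<union> set P2 \<union> set P3" "y \<notin> set P1 \<union> set P2 \<union> set P3" "z \<notin> set P1 \<union> set P2 \<union> set P3"
    using g xyz by auto
  have dist: "distinct (x # P1 @ y # P2 @ z # P3)"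
    using g notS d dj by auto
  have sub: "set (x # P1 @ y # P2 @ z # P3) \<subseteq> V" using g xyz SV by auto
  have "2 * length (x # P1 @ y # P2 @ z # P3) = 6 + 2 * length P1 + 2 * length P2 + 2 * length P3" by simp
  also have "\<dots> \<ge> 3 * L" using g by simp
  finally have "L < length (x # P1 @ y # P2 @ z # P3)" using L by simp
  moreover have "length (x # P1 @ y # P2 @ z # P3) \<ge> 3" by simp
  ultimately show ?thesis using s5 cl dist sub by (simp add: cycle_iff)
qed

lemma simple_path:
  assumes "(adj_in E W)\<^sup>*\<^sup>* a b" "a \<in> W"
  shows "\<exists>p. p \<noteq> [] \<and> hd p = a \<and> last p = b \<and> distinct p \<and> set p \<subseteq> W \<and>
             successively (\<lambda>u v. {u,v} \<in> E) p"
  using assms(1)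
proof (induction rule: rtranclp_induct)
  case base thus ?case using assms(2) by (intro exI[of _ "[a]"]) auto
next
  case (step y z)
  then obtain p where p: "p \<noteq> []" "hd p = a" "last p = y" "distinct p" "set p \<subseteq> W"
    "successively (\<lambda>u v. {u,v} \<in> E) p" by blast
  have yz: "{y,z} \<in> E" "z \<in> W" using step(2) by (auto simp: adj_in_def)
  show ?case
  proof (cases "z \<in> set p")
    case True
    then obtain p1 p2 where pp: "p = p1 @ z # p2" using split_list by fastforce
    have "successively (\<lambda>u v. {u,v} \<in> E) (p1 @ [z])"
      using p(6) pp by (simp add: successively_append_iff)
    moreover have "hd (p1 @ [z]) = a" using p(2) pp by (cases p1) auto
    ultimately show ?thesis using p pp by (intro exI[of _ "p1 @ [z]"]) auto
  next
    case False
    have "successively (\<lambda>u v. {u,v} \<in> E) (p @ [z])"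
      using p yz by (simp add: successively_append_iff)
    thus ?thesis using p yz False by (intro exI[of _ "p @ [z]"]) auto
  qed
qed

lemma tree_no_two:
  assumes tr: "is_tree N TE" and tN: "t \<in> N" and ne: "t' \<noteq> x"
    and e1: "{t',t} \<in> TE" and e2: "{x,t} \<in> TE" and c: "conn_in TE (N - {t}) t' x"
  shows False
proof -
  from c have "(adj_in TE (N - {t}))\<^sup>*\<^sup>* t' x" "t' \<in> N - {t}" by (auto simp: conn_in_def)
  from simple_path[OF this] obtain p where p: "p \<noteq> []" "hd p = t'" "last p = x" "distinct p"
    "set p \<subseteq> N - {t}" "successively (\<lambda>u v. {u,v} \<in> TE) p" by blast
  have "length p \<noteq> 1" using p ne by (cases p) auto
  hence lp: "length p \<ge> 2" using p(1) by (cases p) (auto simp: Suc_le_eq)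
  have "is_cycle N TE (t # p)"
    unfolding cycle_iff using p lp tN e1 e2 by (auto simp: successively_Cons insert_commute)
  thus False using tr by (auto simp: is_tree_def)
qed

lemma exit_t:
  assumes "(adj_in TE N)\<^sup>*\<^sup>* s x" "s \<in> N - {t}"
  shows "(x \<noteq> t \<and> conn_in TE (N - {t}) s x) \<or> (\<exists>t'. adj_in TE N t' t \<and> conn_in TE (N - {t}) s t')"
  using assms(1)
proof (induction rule: rtranclp_induct)
  case base thus ?case using assms(2) by (auto simp: conn_refl)
next
  case (step y z)
  show ?case
  proof (cases "y \<noteq> t \<and> conn_in TE (N - {t}) s y")
    case True
    show ?thesis
    proof (cases "z = t")
      case True thus ?thesis using step(2) \<open>y \<noteq> t \<and> conn_in TE (N - {t}) s y\<close> by blast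
    next
      case False
      have "adj_in TE (N - {t}) y z" using step(2) False True by (auto simp: adj_in_def)
      hence "conn_in TE (N - {t}) y z" by (auto simp: conn_in_def adj_in_def)
      thus ?thesis using True False by (auto intro: conn_trans)
    qed
  next
    case False thus ?thesis using step(3) by blast
  qed
qed

lemma exit_set:
  assumes "(adj_in TE Y)\<^sup>*\<^sup>* r y" "r \<in> B" "y \<notin> B"
  shows "\<exists>a b. adj_in TE Y a b \<and> a \<in> B \<and> b \<notin> B"
  using assms by (induction rule: rtranclp_induct) auto

lemma miss:
  assumes td: "tree_decomp V E N TE bag" and tN: "t \<in> N"
    and full: "\<forall>t'\<in>N. {t,t'} \<in> TE \<longrightarrow> card (bag t \<inter> bag t') < card (bag t)"
    and fin: "finite (bag t)"
    and v: "v \<in> V - bag t"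
  shows "\<exists>z \<in> bag t. \<forall>u. conn_in E (V - bag t) v u \<longrightarrow> {u,z} \<notin> E"
proof -
  define S where "S = bag t"
  have tr: "is_tree N TE" using td by (simp add: tree_decomp_def)
  have sub: "\<forall>r\<in>N. bag r \<subseteq> V" and cov: "\<forall>w\<in>V. \<exists>r\<in>N. w \<in> bag r"
    and ecov: "\<forall>e\<in>E. \<exists>r\<in>N. e \<subseteq> bag r"
    and sc: "\<forall>w\<in>V. connected_set TE {r \<in> N. w \<in> bag r}"
    using td by (auto simp: tree_decomp_def)
  obtain s where s: "s \<in> N" "v \<in> bag s" using cov v by blast
  have st: "s \<noteq> t" using s v by auto
  have Nc: "connected_set TE N" using tr by (simp add: is_tree_def)
  hence "(adj_in TE N)\<^sup>*\<^sup>* s t" using s tN by (auto simp: connected_set_def conn_in_def)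
  from exit_t[OF this] s st obtain t' where t': "adj_in TE N t' t" "conn_in TE (N - {t}) s t'"
    by blast
  define B where "B = {r. conn_in TE (N - {t}) t' r}"
  have sB: "s \<in> B" using conn_sym[OF t'(2)] by (simp add: B_def)
  have tB: "t \<notin> B" by (auto simp: B_def conn_in_def)
  have Bclosed: "Y \<subseteq> B" if "connected_set TE Y" "Y \<subseteq> N - {t}" "y0 \<in> Y" "y0 \<in> B" for Y y0
  proof
    fix y assume "y \<in> Y"
    hence "conn_in TE Y y0 y" using that by (auto simp: connected_set_def)
    hence "conn_in TE (N - {t}) y0 y" using conn_mono[OF that(2)] by blast
    thus "y \<in> B" using that(4) conn_trans[of TE "N - {t}" t' y0 y] by (simp add: B_def)
  qed
  have NuB: "{r \<in> N. u \<in> bag r} \<subseteq> B" if "conn_in E (V - S) v u" for u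
  proof -
    have "(adj_in E (V - S))\<^sup>*\<^sup>* v u" using that by (simp add: conn_in_def)
    thus ?thesis
    proof (induction rule: rtranclp_induct)
      case base
      show ?case using s sB v sc Bclosed[of "{r \<in> N. v \<in> bag r}" s] by (auto simp: S_def)
    next
      case (step u1 u2)
      have a: "{u1,u2} \<in> E" "u2 \<in> V - S" using step(2) by (auto simp: adj_in_def)
      then obtain r where r: "r \<in> N" "{u1,u2} \<subseteq> bag r" using ecov by blast
      hence "r \<in> B" using step(3) by auto
      show ?case using Bclosed[of "{r \<in> N. u2 \<in> bag r}" r] sc a r \<open>r \<in> B\<close> by (auto simp: S_def)
    qed
  qed
  have t'N: "t' \<in> N" "{t,t'} \<in> TE" using t' by (auto simp: adj_in_def insert_commute)
  have "card (S \<inter> bag t') < card S" using full t'N by (simp add: S_def)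
  hence "\<not> S \<subseteq> bag t'" by (metis Int_absorb2 less_irrefl)
  then obtain z where z: "z \<in> S" "z \<notin> bag t'" by blast
  have "{u,z} \<notin> E" if u: "conn_in E (V - S) v u" for u
  proof
    assume uz: "{u,z} \<in> E"
    then obtain r where r: "r \<in> N" "{u,z} \<subseteq> bag r" using ecov by blast
    have rB: "r \<in> B" using NuB[OF u] r by auto
    have zV: "z \<in> V" using z sub tN by (auto simp: S_def)
    let ?Y = "{r \<in> N. z \<in> bag r}"
    have "conn_in TE ?Y r t" using sc zV r z tN by (auto simp: connected_set_def S_def)
    hence "(adj_in TE ?Y)\<^sup>*\<^sup>* r t" by (simp add: conn_in_def)
    from exit_set[OF this rB tB] obtain a b where ab: "adj_in TE ?Y a b" "a \<in> B" "b \<notin> B" by blast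
    have "b = t"
    proof (rule ccontr)
      assume "b \<noteq> t"
      hence "adj_in TE (N - {t}) a b" using ab tB by (auto simp: adj_in_def)
      hence "conn_in TE (N - {t}) a b" by (auto simp: conn_in_def adj_in_def)
      thus False using ab conn_trans[of TE "N - {t}" t' a b] by (simp add: B_def)
    qed
    have "a = t'"
    proof (rule ccontr)
      assume "a \<noteq> t'"
      have "{a,t} \<in> TE" using ab \<open>b = t\<close> by (auto simp: adj_in_def)
      moreover have "{t',t} \<in> TE" using t' by (auto simp: adj_in_def)
      ultimately show False using tree_no_two[OF tr tN, of t' a] \<open>a \<noteq> t'\<close> ab(2) by (auto simp: B_def)
    qed
    thus False using ab z by (auto simp: adj_in_def)
  qed
  thus ?thesis using z by (auto simp: S_def)
qed

lemma core:
  fixes S :: "'a set" and c :: "'a set \<Rightarrow> 'a set"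
  assumes fin: "finite S" and two: "card S \<ge> 2"
    and miss: "\<And>x y. x\<in>S \<Longrightarrow> y\<in>S \<Longrightarrow> x\<noteq>y \<Longrightarrow> \<exists>z\<in>S. \<forall>u\<in>c{x,y}. {u,z}\<notin>E"
    and adj: "\<And>x y. x\<in>S \<Longrightarrow> y\<in>S \<Longrightarrow> x\<noteq>y \<Longrightarrow> \<exists>u\<in>c{x,y}. {u,x}\<in>E"
    and R1: "\<And>x y z. x\<in>S \<Longrightarrow> y\<in>S \<Longrightarrow> z\<in>S \<Longrightarrow> x\<noteq>y \<Longrightarrow> y\<noteq>z \<Longrightarrow> x\<noteq>z \<Longrightarrow>
               (\<forall>u\<in>c{x,y}. {u,z}\<notin>E) \<Longrightarrow> c{x,z} = c{y,z}"
  shows False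
proof -
  have adj2: "\<exists>u\<in>c{x,y}. {u,y}\<in>E" if "x\<in>S" "y\<in>S" "x\<noteq>y" for x y
    using adj[of y x] that by (simp add: insert_commute)
  have zdist: "z \<noteq> x \<and> z \<noteq> y" if "x\<in>S" "y\<in>S" "x\<noteq>y" "\<forall>u\<in>c{x,y}. {u,z}\<notin>E" for x y z
    using adj[OF that(1-3)] adj2[OF that(1-3)] that(4) by blast
  have star: "\<exists>U w D. U \<subseteq> S \<and> w \<in> S \<and> w \<notin> U \<and> finite U \<and> card U = n + 2 \<and> (\<forall>u\<in>U. c{u,w} = D)" for n
  proof (induction n)
    case 0
    obtain a b where ab: "a \<in> S" "b \<in> S" "a \<noteq> b"
      using two by (metis card_2_iff' card_le_Suc0_iff_eq fin not_less_eq_eq numeral_2_eq_2)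
    obtain z where z: "z \<in> S" "\<forall>u\<in>c{a,b}. {u,z}\<notin>E" using miss[OF ab] by blast
    have zz: "z \<noteq> a" "z \<noteq> b" using zdist[OF ab z(2)] by auto
    have "c{a,z} = c{b,z}" using R1[OF ab(1,2) z(1) ab(3) zz(2)[symmetric] zz(1)[symmetric] z(2)] .
    thus ?case using ab z zz by (intro exI[of _ "{a,b}"] exI[of _ z] exI[of _ "c{a,z}"]) auto
  next
    case (Suc n)
    then obtain U w D where U: "U \<subseteq> S" "w \<in> S" "w \<notin> U" "finite U" "card U = n + 2"
      "\<forall>u\<in>U. c{u,w} = D" by blast
    have "U \<noteq> {}" using U by auto
    then obtain u0 where u0: "u0 \<in> U" by blast
    have u0w: "u0 \<noteq> w" using u0 U by auto
    obtain z where z: "z \<in> S" "\<forall>u\<in>c{u0,w}. {u,z}\<notin>E" using miss[of u0 w] u0 U u0w by blast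
    have zD: "\<forall>u\<in>D. {u,z}\<notin>E" using z U u0 by auto
    have zU: "z \<notin> U"
    proof
      assume "z \<in> U"
      hence "z \<noteq> w" using U by auto
      have "\<forall>u\<in>c{z,w}. {u,z}\<notin>E" using zD U \<open>z \<in> U\<close> by auto
      thus False using zdist[of z w z] \<open>z \<in> U\<close> U \<open>z \<noteq> w\<close> by auto
    qed
    have zw: "z \<noteq> w" using zdist[of u0 w z] z u0 U u0w by auto
    have eq: "c{u,z} = c{w,z}" if "u \<in> U" for u
    proof -
      have "u \<noteq> w" "u \<noteq> z" using that U zU by auto
      moreover have "\<forall>x\<in>c{u,w}. {x,z}\<notin>E" using zD U that by auto
      ultimately show ?thesis using R1[of u w z] that U z zw by auto
    qed
    show ?case
      using U zU zw z eq
      by (intro exI[of _ "insert w U"] exI[of _ z] exI[of _ "c{w,z}"]) auto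
  qed
  obtain U w D where U: "U \<subseteq> S" "w \<in> S" "w \<notin> U" "finite U" "card U = card S + 2"
    using star[of "card S"] by blast
  have "card (insert w U) \<le> card S" using U fin by (intro card_mono) auto
  thus False using U by simp
qed

lemma lct_avoid:
  assumes "X \<subseteq> V" "int (lct V E) > int (card X)"
  shows "\<exists>C. longest_cycle V E C \<and> set C \<inter> X = {}"
proof (rule ccontr)
  assume "\<not> ?thesis"
  hence "\<forall>C. longest_cycle V E C \<longrightarrow> set C \<inter> X \<noteq> {}" by blast
  hence "lct V E \<le> card X" unfolding lct_def using assms(1) by (intro Least_le) blast
  thus False using assms(2) by simp
qed

lemma comp_eq:
  assumes "w \<in> {u. conn_in E W h1 u}" "w \<in> {u. conn_in E W h2 u}"
  shows "{u. conn_in E W h1 u} = {u. conn_in E W h2 u}"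
proof -
  have "conn_in E W h1 h2" using assms by (auto intro: conn_trans dest: conn_sym)
  hence "conn_in E W h2 h1" by (rule conn_sym)
  show ?thesis using \<open>conn_in E W h1 h2\<close> \<open>conn_in E W h2 h1\<close> by (auto intro: conn_trans)
qed

lemma edge_exists:
  assumes "(adj_in E W)\<^sup>*\<^sup>* x y" "x \<noteq> y" shows "\<exists>a b. adj_in E W a b"
  using assms by (induction rule: rtranclp_induct) auto

theorem lemma6p1:
  fixes V :: "'a set" and E :: "'a set set"
    and N :: "'b set" and TE :: "'b set set" and bag :: "'b \<Rightarrow> 'a set" and t :: 'b
  assumes "two_connected V E"
    and "full_tree_decomp V E N TE bag"
    and "t \<in> N"
    and "int (lct V E) > int (card (bag t)) - 2"
  shows "\<exists>l C. l \<le> 2 \<and> l_attractor V E l (bag t) C"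
proof -
  define S where "S = bag t"
  have tc: "graph V E \<and> card V > 2 \<and> (\<forall>X\<subseteq>V. card X < 2 \<longrightarrow> connected_set E (V - X))"
    using assms(1) unfolding two_connected_def .
  hence g: "graph V E" and cV: "card V > 2" by auto
  have "connected_set E (V - {})" using tc[THEN conjunct2, THEN conjunct2, rule_format, of "{}"] by simp
  hence conV: "connected_set E V" by simp
  have finV: "finite V" using g by (simp add: graph_def)
  have td: "tree_decomp V E N TE bag" using assms(2) by (simp add: full_tree_decomp_def)
  have cards: "\<forall>r\<in>N. card (bag r) = card S" using assms(2,3) by (simp add: full_tree_decomp_def S_def)
  have SV: "S \<subseteq> V" using td assms(3) by (auto simp: tree_decomp_def S_def)
  have finS: "finite S" using SV finV finite_subset by blast
  have fullt: "\<forall>t'\<in>N. {t,t'} \<in> TE \<longrightarrow> card (bag t \<inter> bag t') < card (bag t)"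
  proof (intro ballI impI)
    fix t' assume "t' \<in> N" "{t,t'} \<in> TE"
    hence "card (bag t \<inter> bag t') = treewidth V E" using assms(2,3) by (simp add: full_tree_decomp_def)
    moreover have "card (bag t) = treewidth V E + 1" using assms(2,3) by (simp add: full_tree_decomp_def)
    ultimately show "card (bag t \<inter> bag t') < card (bag t)" by simp
  qed
  have claim: "\<exists>C. longest_cycle V E C \<and> card (set C \<inter> S) \<le> 1"
  proof (rule ccontr)
    assume H: "\<not> ?thesis"
    show False
    proof (cases "card S \<ge> 2")
      case False
      have "\<not> card V \<le> Suc 0" using cV by simp
      then obtain x y where xy: "x \<in> V" "y \<in> V" "x \<noteq> y" using card_le_Suc0_iff_eq[OF finV] by blast
      have "(adj_in E V)\<^sup>*\<^sup>* x y" using conV xy by (auto simp: connected_set_def conn_in_def)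
      then obtain a b where "adj_in E V a b" using edge_exists[of E V x y] xy(3) by blast
      hence ab: "{a,b} \<in> E" by (simp add: adj_in_def)
      have "\<forall>e\<in>E. \<exists>x y. x \<noteq> y \<and> e = {x, y} \<and> x \<in> V \<and> y \<in> V" using g unfolding graph_def by blast
      then obtain p q where pq: "p \<noteq> q" "{a,b} = {p,q}" using ab by blast
      have "\<forall>e\<in>E. \<exists>r\<in>N. e \<subseteq> bag r" using td unfolding tree_decomp_def by blast
      then obtain r where r: "r \<in> N" "{a,b} \<subseteq> bag r" using ab by blast
      have "bag r \<subseteq> V" using td r unfolding tree_decomp_def by blast
      hence "finite (bag r)" using finV finite_subset by blast
      moreover have "card (bag r) \<le> Suc 0" using cards r False by simp
      ultimately have "\<forall>a\<in>bag r. \<forall>b\<in>bag r. a = b" using card_le_Suc0_iff_eq[of "bag r"] by simp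
      hence "a = b" using r by blast
      hence "{p,q} = {a}" using pq(2) by simp
      hence "p = q" by (simp add: doubleton_eq_iff)
      thus False using pq(1) by blast
    next
      case True
      have pairs: "\<exists>C. longest_cycle V E C \<and> set C \<inter> S = {x,y}" if xy: "x \<in> S" "y \<in> S" "x \<noteq> y" for x y
      proof -
        have "card (S - {x,y}) = card S - 2" using xy finS by (simp add: card_Diff_subset)
        hence "int (lct V E) > int (card (S - {x,y}))" using assms(4) True by (simp add: S_def)
        then obtain C where C: "longest_cycle V E C" "set C \<inter> (S - {x,y}) = {}"
          using lct_avoid[of "S - {x,y}" V E] SV by blast
        have sub: "set C \<inter> S \<subseteq> {x,y}" using C by auto
        have "card (set C \<inter> S) \<ge> 2" using H C by auto
        hence "set C \<inter> S = {x,y}" using sub xy by (intro card_seteq) auto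
        thus ?thesis using C by blast
      qed
      have "\<not> card S \<le> Suc 0" using True by simp
      then obtain x0 y0 where xy0: "x0 \<in> S" "y0 \<in> S" "x0 \<noteq> y0" using card_le_Suc0_iff_eq[OF finS] by blast
      obtain C0 where C0: "longest_cycle V E C0" using pairs[OF xy0] by blast
      define L where "L = length C0"
      have lenL: "length C = L" if "longest_cycle V E C" for C
        using that C0 unfolding longest_cycle_def L_def by (meson le_antisym)
      have L3: "3 \<le> L" using C0 by (auto simp: L_def longest_cycle_def is_cycle_def)
      have hp: "\<exists>P. goodp E V S L x y P" if hxy: "x \<in> S" "y \<in> S" "x \<noteq> y" for x y
      proof -
        obtain C where C: "longest_cycle V E C" "set C \<inter> S = {x,y}" using pairs[OF hxy] by blast
        from split_cycle[of V E C S x y] C hxy lenL[OF C(1)] show ?thesis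
          by (auto simp: longest_cycle_def)
      qed
      define R where "R e = (SOME P. \<exists>x y. e = {x,y} \<and> goodp E V S L x y P)" for e
      define cc where "cc e = {u. conn_in E (V - S) (hd (R e)) u}" for e
      have Rp: "\<exists>x' y'. {x,y} = {x',y'} \<and> goodp E V S L x' y' (R{x,y})" if "x \<in> S" "y \<in> S" "x \<noteq> y" for x y
      proof -
        have "\<exists>P x' y'. {x,y} = {x',y'} \<and> goodp E V S L x' y' P" using hp[OF that] by blast
        hence "\<exists>x' y'. {x,y} = {x',y'} \<and> goodp E V S L x' y' (SOME P. \<exists>x' y'. {x,y} = {x',y'} \<and> goodp E V S L x' y' P)"
          by (rule someI_ex)
        thus ?thesis by (simp add: R_def)
      qed
      have Rsub: "set (R{x,y}) \<subseteq> cc{x,y} \<and> R{x,y} \<noteq> [] \<and> set (R{x,y}) \<subseteq> V - S"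
        if rxy: "x \<in> S" "y \<in> S" "x \<noteq> y" for x y
      proof -
        obtain x' y' where "goodp E V S L x' y' (R{x,y})" using Rp[OF rxy] by blast
        thus ?thesis unfolding cc_def goodp_def using path_conn[of "R{x,y}" "V - S" E] by auto
      qed
      have orient: "\<exists>P. goodp E V S L x y P \<and> set P \<subseteq> cc{x,y}" if xy: "x \<in> S" "y \<in> S" "x \<noteq> y" for x y
      proof -
        obtain x' y' where x'y': "{x,y} = {x',y'}" "goodp E V S L x' y' (R{x,y})" using Rp[OF xy] by blast
        have s: "set (R{x,y}) \<subseteq> cc{x,y}" using Rsub[OF xy] by blast
        from x'y'(1) have "(x' = x \<and> y' = y) \<or> (x' = y \<and> y' = x)" by (auto simp: doubleton_eq_iff)
        thus ?thesis
        proof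
          assume "x' = x \<and> y' = y" thus ?thesis using x'y' s by blast
        next
          assume "x' = y \<and> y' = x"
          hence "goodp E V S L y x (R{x,y})" using x'y'(2) by simp
          hence "goodp E V S L x y (rev (R{x,y}))" by (rule goodp_rev)
          thus ?thesis using s by (intro exI[of _ "rev (R{x,y})"]) auto
        qed
      qed
      have adj: "\<exists>u\<in>cc{x,y}. {u,x}\<in>E" if xy: "x \<in> S" "y \<in> S" "x \<noteq> y" for x y
      proof -
        obtain P where P: "goodp E V S L x y P" "set P \<subseteq> cc{x,y}" using orient[OF xy] by blast
        hence "hd P \<in> cc{x,y}" "{hd P, x} \<in> E" by (auto simp: goodp_def insert_commute)
        thus ?thesis by blast
      qed
      have miss': "\<exists>z\<in>S. \<forall>u\<in>cc{x,y}. {u,z}\<notin>E" if xy: "x \<in> S" "y \<in> S" "x \<noteq> y" for x y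
      proof -
        have "R{x,y} \<noteq> []" "set (R{x,y}) \<subseteq> V - S" using Rsub[OF xy] by auto
        hence hdv: "hd (R{x,y}) \<in> V - bag t" using hd_in_set[of "R{x,y}"] unfolding S_def by blast
        have fb: "finite (bag t)" using finS by (simp add: S_def)
        from miss[OF td assms(3) fullt fb hdv] obtain z where
          z: "z \<in> bag t" "\<forall>u. conn_in E (V - bag t) (hd (R{x,y})) u \<longrightarrow> {u,z} \<notin> E" by blast
        have "\<forall>u\<in>cc{x,y}. {u,z}\<notin>E" using z(2) unfolding cc_def S_def by blast
        thus ?thesis using z(1) unfolding S_def by blast
      qed
      have ccomp: "\<exists>h. cc e = {u. conn_in E (V - S) h u}" for e
        unfolding cc_def by (rule exI[of _ "hd (R e)"]) (rule refl)
      have disj: "set P \<inter> set Q = {}" if dj: "set P \<subseteq> cc e1" "set Q \<subseteq> cc e2" "cc e1 \<noteq> cc e2" for P Q e1 e2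
      proof (rule ccontr)
        assume "set P \<inter> set Q \<noteq> {}"
        then obtain w where w: "w \<in> cc e1" "w \<in> cc e2" using dj by blast
        obtain h1 where h1: "cc e1 = {u. conn_in E (V - S) h1 u}" using ccomp by blast
        obtain h2 where h2: "cc e2 = {u. conn_in E (V - S) h2 u}" using ccomp by blast
        have w1: "w \<in> {u. conn_in E (V - S) h1 u}" using w(1) h1 by simp
        have w2: "w \<in> {u. conn_in E (V - S) h2 u}" using w(2) h2 by simp
        have "cc e1 = cc e2" unfolding h1 h2 using comp_eq[OF w1 w2] .
        thus False using dj(3) by simp
      qed
      have R1: "cc{x,z} = cc{y,z}" if d: "x\<in>S" "y\<in>S" "z\<in>S" "x\<noteq>y" "y\<noteq>z" "x\<noteq>z"
        and nz: "\<forall>u\<in>cc{x,y}. {u,z}\<notin>E" for x y z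
      proof (rule ccontr)
        assume ne: "cc{x,z} \<noteq> cc{y,z}"
        obtain P1 where P1: "goodp E V S L x y P1" "set P1 \<subseteq> cc{x,y}" using orient[of x y] d by blast
        obtain P2 where P2: "goodp E V S L y z P2" "set P2 \<subseteq> cc{y,z}" using orient[of y z] d by blast
        obtain P3 where P3: "goodp E V S L z x P3" "set P3 \<subseteq> cc{z,x}" using orient[of z x] d by blast
        have "cc{z,y} = cc{y,z}" by (simp add: insert_commute)
        hence a1: "\<exists>u\<in>cc{y,z}. {u,z}\<in>E" using adj[of z y] d by metis
        have a2: "\<exists>u\<in>cc{z,x}. {u,z}\<in>E" using adj[of z x] d by blast
        have n12: "cc{x,y} \<noteq> cc{y,z}" using a1 nz by auto
        have n13: "cc{x,y} \<noteq> cc{z,x}" using a2 nz by auto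
        have n23: "cc{y,z} \<noteq> cc{z,x}" using ne by (simp add: insert_commute)
        have "is_cycle V E (x # P1 @ y # P2 @ z # P3) \<and> L < length (x # P1 @ y # P2 @ z # P3)"
          using triangle[OF d(4,5,6) d(1,2,3) SV P1(1) P2(1) P3(1)
              disj[OF P1(2) P2(2) n12] disj[OF P2(2) P3(2) n23] disj[OF P1(2) P3(2) n13] L3] .
        thus False using C0 by (auto simp: longest_cycle_def L_def)
      qed
      show False
      proof (rule core[of S cc E, OF finS True])
        show "\<exists>z\<in>S. \<forall>u\<in>cc{x,y}. {u,z}\<notin>E" if "x\<in>S" "y\<in>S" "x\<noteq>y" for x y
          using miss'[OF that] .
        show "\<exists>u\<in>cc{x,y}. {u,x}\<in>E" if "x\<in>S" "y\<in>S" "x\<noteq>y" for x y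
          using adj[OF that] .
        show "cc{x,z} = cc{y,z}" if "x\<in>S" "y\<in>S" "z\<in>S" "x\<noteq>y" "y\<noteq>z" "x\<noteq>z"
          "\<forall>u\<in>cc{x,y}. {u,z}\<notin>E" for x y z
          using R1[OF that] .
      qed
    qed
  qed
  then obtain C where C: "longest_cycle V E C" "card (set C \<inter> S) \<le> 1" by blast
  have "attractor V E S C"
    unfolding attractor_def
  proof (intro conjI allI impI)
    show "longest_cycle V E C" by fact
    show "fenced V E S C" using C fenced_small by (auto simp: longest_cycle_def)
    fix D assume "longest_cycle V E D \<and> S_equiv S C D"
    thus "fenced V E S D" using C fenced_small[of V E D S] by (auto simp: longest_cycle_def S_equiv_def)
  qed
  hence "l_attractor V E (card (set C \<inter> S)) S C" by (simp add: l_attractor_def)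
  moreover have "card (set C \<inter> S) \<le> 2" using C(2) by simp
  ultimately show ?thesis unfolding S_def by blast
qed

end
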